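(* (Unconditional stability, 2D multiplicative kernel.) Let $\mathcal A^{\times}=\mathcal D_x\otimes\mathcal D_y-\mathcal G_x\otimes\mathcal G_y$ be the two-dimensional collocation matrix for the multiplicative kernel (see context), $T>0$, $N\ge1$, $\tau=T/N$, and $C_d=\frac{4(b-a)^{1-\gamma}(d-c)^{1-\gamma}}{(1-\gamma)^2}$. If vectors $\varepsilon^0,\dots,\varepsilon^N$ (indexed by $\{1,\dots,2M_x-1\}\times\{1,\dots,2M_y-1\}$) satisfy $$\Big(I+\frac{\tau}{2}\mathcal A^{\times}\Big)\varepsilon^k=\Big(I-\frac{\tau}{2}\mathcal A^{\times}\Big)\varepsilon^{k-1},\qquad k=1,\dots,N,$$ then $\|\varepsilon^k\|_\infty\le e^{TC_d}\|\varepsilon^0\|_\infty$ for all $k=0,\dots,N$, for every $M_x,M_y\ge2$ and every $\tau$.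
   Context: Fix $\gamma\in(0,1)$. For an interval $[\alpha,\beta]$ and an integer $m\ge2$ let $h=(\beta-\alpha)/m$, $x_s=\alpha+sh$ ($s\in\{0,\tfrac12,\dots,m\}$), and let $\phi_{s}$ be the piecewise quadratic Lagrange basis: for integers $0\le l\le m$, $\phi_l(x)=\frac{x-x_{l-1}}{h}\cdot\frac{2x-(x_l+x_{l-1})}{h}$ on $[x_{l-1},x_l]\cap[\alpha,\beta]$, $\phi_l(x)=\frac{x_{l+1}-x}{h}\cdot\frac{(x_{l+1}+x_l)-2x}{h}$ on $[x_l,x_{l+1}]\cap[\alpha,\beta]$, $0$ otherwise; for $l=1,\dots,m$, $\phi_{l-\frac12}(x)=\frac{4(x-x_{l-1})(x_l-x)}{h^2}$ on $[x_{l-1},x_l]$, $0$ otherwise. The associated 1D matrices are $\mathcal D=\mathrm{diag}(d_1,\dots,d_{2m-1})$ and $\mathcal G=(g_{ij})_{i,j=1}^{2m-1}$ with $d_i=\int_\alpha^\beta|x_{i/2}-y|^{-\gamma}dy$ and $g_{ij}=\int_\alpha^\beta\phi_{j/2}(y)|x_{i/2}-y|^{-\gamma}dy$. The following fact, established in earlier work, may be used: all $g_{ij}>0$ and $\mathcal D-\mathcal G$ is strictly diagonally dominant by rows. For $a<b$, $c<d$, $M_x,M_y\ge2$: $\mathcal D_x,\mathcal G_x$ are these matrices for $[a,b]$, $m=M_x$, and $\mathcal D_y,\mathcal G_y$ for $[c,d]$, $m=M_y$, and $\mathcal A^{\times}=\mathcal D_x\otimes\mathcal D_y-\mathcal G_x\otimes\mathcal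 G_y$ (the collocation matrix of $u\mapsto\int_\Omega\frac{u(x,y)-u(\bar x,\bar y)}{|x-\bar x|^\gamma|y-\bar y|^\gamma}d\bar xd\bar y$, $\Omega=(a,b)\times(c,d)$). $\|v\|_\infty$ is the maximum absolute entry. *)

theory Defs
  imports "HOL-Analysis.Analysis"
begin

definition node :: "real \<Rightarrow> real \<Rightarrow> nat \<Rightarrow> real \<Rightarrow> real" where
  "node \<alpha> \<beta> m s = \<alpha> + s * ((\<beta> - \<alpha>) / real m)"

text \<open>Piecewise quadratic Lagrange basis function phi_{j/2} (j a natural number,
  so that the node index j/2 ranges over the half-integers).\<close>
definition qbasis :: "real \<Rightarrow> real \<Rightarrow> nat \<Rightarrow> nat \<Rightarrow> real \<Rightarrow> real" where
  "qbasis \<alpha> \<beta> m j y =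
    (let h = (\<beta> - \<alpha>) / real m; x = node \<alpha> \<beta> m in
     if even j then
       (let l = real (j div 2) in
        if x (l - 1) \<le> y \<and> y \<le> x l \<and> \<alpha> \<le> y \<and> y \<le> \<beta> then
          ((y - x (l - 1)) / h) * ((2 * y - (x l + x (l - 1))) / h)
        else if x l \<le> y \<and> y \<le> x (l + 1) \<and> \<alpha> \<le> y \<and> y \<le> \<beta> then
          ((x (l + 1) - y) / h) * (((x (l + 1) + x l) - 2 * y) / h)
        else 0)
     else
       (let l = real ((j + 1) div 2) in
        if x (l - 1) \<le> y \<and> y \<le> x l then
          4 * (y - x (l - 1)) * (x l - y) / h\<^sup>2
        else 0))"

definition idx :: "nat \<Rightarrow> nat set" where
  "idx m = {1..2 * m - 1}"

definition dcoef :: "real \<Rightarrow> real \<Rightarrow> real \<Rightarrow> nat \<Rightarrow> nat \<Rightarrow> real" where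
  "dcoef \<gamma> \<alpha> \<beta> m i =
     integral {\<alpha>..\<beta>} (\<lambda>y. \<bar>node \<alpha> \<beta> m (real i / 2) - y\<bar> powr (- \<gamma>))"

definition Dmat :: "real \<Rightarrow> real \<Rightarrow> real \<Rightarrow> nat \<Rightarrow> nat \<Rightarrow> nat \<Rightarrow> real" where
  "Dmat \<gamma> \<alpha> \<beta> m i j = (if i = j then dcoef \<gamma> \<alpha> \<beta> m i else 0)"

definition Gmat :: "real \<Rightarrow> real \<Rightarrow> real \<Rightarrow> nat \<Rightarrow> nat \<Rightarrow> nat \<Rightarrow> real" where
  "Gmat \<gamma> \<alpha> \<beta> m i j =
     integral {\<alpha>..\<beta>} (\<lambda>y. qbasis \<alpha> \<beta> m j y * \<bar>node \<alpha> \<beta> m (real i / 2) - y\<bar> powr (- \<gamma>))"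

text \<open>Known fact (earlier work): all g_ij > 0 and D - G strictly diagonally dominant by rows.\<close>
definition known_fact :: "real \<Rightarrow> real \<Rightarrow> real \<Rightarrow> nat \<Rightarrow> bool" where
  "known_fact \<gamma> \<alpha> \<beta> m \<longleftrightarrow>
     (\<forall>i\<in>idx m. \<forall>j\<in>idx m. Gmat \<gamma> \<alpha> \<beta> m i j > 0) \<and>
     (\<forall>i\<in>idx m. \<bar>Dmat \<gamma> \<alpha> \<beta> m i i - Gmat \<gamma> \<alpha> \<beta> m i i\<bar>
        > (\<Sum>j\<in>idx m - {i}. \<bar>Dmat \<gamma> \<alpha> \<beta> m i j - Gmat \<gamma> \<alpha> \<beta> m i j\<bar>))"

text \<open>Action of A^x = D_x (x) D_y - G_x (x) G_y on a vector indexed by idx Mx \<times> idx My.\<close>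
definition Amul :: "real \<Rightarrow> real \<Rightarrow> real \<Rightarrow> real \<Rightarrow> real \<Rightarrow> nat \<Rightarrow> nat
                    \<Rightarrow> (nat \<times> nat \<Rightarrow> real) \<Rightarrow> nat \<times> nat \<Rightarrow> real" where
  "Amul \<gamma> a b c d Mx My v p =
     (\<Sum>q\<in>idx Mx \<times> idx My.
        (Dmat \<gamma> a b Mx (fst p) (fst q) * Dmat \<gamma> c d My (snd p) (snd q)
         - Gmat \<gamma> a b Mx (fst p) (fst q) * Gmat \<gamma> c d My (snd p) (snd q)) * v q)"

definition supnorm :: "'a set \<Rightarrow> ('a \<Rightarrow> real) \<Rightarrow> real" where
  "supnorm I v = Max ((\<lambda>p. \<bar>v p\<bar>) ` I)"

end

theory Submission
  imports Defs
begin


lemma ker_right: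
  fixes \<gamma> x \<beta> :: real
  assumes g: "0 < \<gamma>" "\<gamma> < 1" and xb: "x \<le> \<beta>"
  shows "((\<lambda>y. \<bar>x - y\<bar> powr (-\<gamma>)) has_integral ((\<beta>-x) powr (1-\<gamma>)/(1-\<gamma>))) {x..\<beta>}"
proof -
  define F where "F = (\<lambda>y. (y - x) powr (1-\<gamma>)/(1-\<gamma>))"
  have c: "continuous_on {x..\<beta>} F" unfolding F_def
    by (intro continuous_intros continuous_on_powr') (use g in auto)
  have d: "(F has_vector_derivative \<bar>x - y\<bar> powr (-\<gamma>)) (at y)" if "y \<in> {x<..<\<beta>}" for y
  proof -
    have "((\<lambda>y. (y - x) powr (1-\<gamma>)) has_real_derivative (1-\<gamma>) * (y-x) powr (1-\<gamma>-1)) (at y)"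
      using that by (intro DERIV_powr[where r="1-\<gamma>", of "\<lambda>y. y - x" _ 1, simplified, THEN DERIV_cong]
           | (auto intro!: derivative_eq_intros simp: has_real_derivative_powr)) +
    then have "(F has_real_derivative \<bar>x - y\<bar> powr (-\<gamma>)) (at y)" unfolding F_def
      using that g by (auto intro!: derivative_eq_intros)
    then show ?thesis by (simp add: has_real_derivative_iff_has_vector_derivative)
  qed
  have "((\<lambda>y. \<bar>x - y\<bar> powr (-\<gamma>)) has_integral (F \<beta> - F x)) {x..\<beta>}"
    by (rule fundamental_theorem_of_calculus_interior[OF xb c d])
  then show ?thesis using g by (simp add: F_def)
qed


lemma ker_left:
  fixes \<gamma> x \<alpha> :: real
  assumes g: "0 < \<gamma>" "\<gamma> < 1" and xb: "\<alpha> \<le> x"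
  shows "((\<lambda>y. \<bar>x - y\<bar> powr (-\<gamma>)) has_integral ((x-\<alpha>) powr (1-\<gamma>)/(1-\<gamma>))) {\<alpha>..x}"
proof -
  define F where "F = (\<lambda>y. -((x - y) powr (1-\<gamma>))/(1-\<gamma>))"
  have c: "continuous_on {\<alpha>..x} F" unfolding F_def
    by (intro continuous_intros continuous_on_powr') (use g in auto)
  have d: "(F has_vector_derivative \<bar>x - y\<bar> powr (-\<gamma>)) (at y)" if "y \<in> {\<alpha><..<x}" for y
  proof -
    have "((\<lambda>y. (x - y) powr (1-\<gamma>)) has_real_derivative (1-\<gamma>) * (x-y) powr (1-\<gamma>-1) * (-1)) (at y)"
      using that by (auto intro!: derivative_eq_intros)
    then have "(F has_real_derivative \<bar>x - y\<bar> powr (-\<gamma>)) (at y)" unfolding F_def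
      using that g by (auto intro!: derivative_eq_intros)
    then show ?thesis by (simp add: has_real_derivative_iff_has_vector_derivative)
  qed
  have "((\<lambda>y. \<bar>x - y\<bar> powr (-\<gamma>)) has_integral (F x - F \<alpha>)) {\<alpha>..x}"
    by (rule fundamental_theorem_of_calculus_interior[OF xb c d])
  then show ?thesis using g by (simp add: F_def)
qed

lemma ker:
  fixes \<gamma> x \<alpha> \<beta> :: real
  assumes g: "0 < \<gamma>" "\<gamma> < 1" and "\<alpha> \<le> x" "x \<le> \<beta>"
  shows "(\<lambda>y. \<bar>x - y\<bar> powr (-\<gamma>)) integrable_on {\<alpha>..\<beta>}"
    "integral {\<alpha>..\<beta>} (\<lambda>y. \<bar>x - y\<bar> powr (-\<gamma>)) \<le> 2 * (\<beta>-\<alpha>) powr (1-\<gamma>) / (1-\<gamma>)"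
proof -
  have h: "((\<lambda>y. \<bar>x - y\<bar> powr (-\<gamma>)) has_integral
     ((x-\<alpha>) powr (1-\<gamma>)/(1-\<gamma>) + (\<beta>-x) powr (1-\<gamma>)/(1-\<gamma>))) {\<alpha>..\<beta>}"
    by (rule has_integral_combine[OF assms(3,4) ker_left ker_right]) (use assms in auto)
  then show "(\<lambda>y. \<bar>x - y\<bar> powr (-\<gamma>)) integrable_on {\<alpha>..\<beta>}" by blast
  have "(x-\<alpha>) powr (1-\<gamma>) \<le> (\<beta>-\<alpha>) powr (1-\<gamma>)" "(\<beta>-x) powr (1-\<gamma>) \<le> (\<beta>-\<alpha>) powr (1-\<gamma>)"
    using assms by (auto intro!: powr_mono2)
  then have "(x-\<alpha>) powr (1-\<gamma>)/(1-\<gamma>) + (\<beta>-x) powr (1-\<gamma>)/(1-\<gamma>) \<le> 2 * (\<beta>-\<alpha>) powr (1-\<gamma>) / (1-\<gamma>)"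
    using g by (simp add: add_divide_distrib[symmetric] divide_right_mono)
  then show "integral {\<alpha>..\<beta>} (\<lambda>y. \<bar>x - y\<bar> powr (-\<gamma>)) \<le> 2 * (\<beta>-\<alpha>) powr (1-\<gamma>) / (1-\<gamma>)"
    using integral_unique[OF h] by simp
qed

lemma node_in:
  assumes "\<alpha> < \<beta>" "i \<in> idx m"
  shows "\<alpha> \<le> node \<alpha> \<beta> m (real i / 2)" "node \<alpha> \<beta> m (real i / 2) \<le> \<beta>"
proof -
  from assms have i: "1 \<le> i" "i \<le> 2*m - 1" by (auto simp: idx_def)
  then have m: "m > 0" by auto
  have r: "real i / 2 \<le> real m" using i by linarith
  have "real i / 2 * ((\<beta> - \<alpha>) / real m) \<le> real m * ((\<beta> - \<alpha>) / real m)"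
    using r assms(1) by (intro mult_right_mono) auto
  also have "\<dots> = \<beta> - \<alpha>" using m by simp
  finally show "node \<alpha> \<beta> m (real i / 2) \<le> \<beta>" unfolding node_def by simp
  show "\<alpha> \<le> node \<alpha> \<beta> m (real i / 2)" unfolding node_def using assms(1) m by simp
qed

lemma quad1: "0 \<le> (u::real) \<Longrightarrow> u \<le> 1 \<Longrightarrow> u * (2*u - 1) \<le> 1"
proof -
  assume "0 \<le> u" "u \<le> 1"
  then have "u * (2*u - 1) \<le> u * 1" by (intro mult_left_mono) auto
  then show ?thesis using \<open>u \<le> 1\<close> by simp
qed

lemma qbasis_le1:
  assumes "\<alpha> < \<beta>" "m > 0"
  shows "qbasis \<alpha> \<beta> m j y \<le> 1"
proof -
  define h where "h = (\<beta> - \<alpha>) / real m"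
  have h: "h > 0" using assms by (simp add: h_def)
  have nd: "node \<alpha> \<beta> m s = \<alpha> + s * h" for s by (simp add: node_def h_def)
  have A: "((y - (\<alpha> + (l-1)*h)) / h) * ((2 * y - ((\<alpha> + l*h) + (\<alpha> + (l-1)*h))) / h) \<le> 1"
    if "\<alpha> + (l-1)*h \<le> y" "y \<le> \<alpha> + l*h" for l
  proof -
    define u where "u = (y - (\<alpha> + (l-1)*h)) / h"
    have u: "0 \<le> u" "u \<le> 1" using that h by (auto simp: u_def field_simps)
    have "(2 * y - ((\<alpha> + l*h) + (\<alpha> + (l-1)*h))) / h = 2*u - 1"
      using h by (simp add: u_def field_simps)
    then show ?thesis using quad1[OF u] by (simp add: u_def)
  qed
  have B: "((\<alpha> + (l+1)*h - y) / h) * (((\<alpha> + (l+1)*h + (\<alpha> + l*h)) - 2 * y) / h) \<le> 1"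
    if "\<alpha> + l*h \<le> y" "y \<le> \<alpha> + (l+1)*h" for l
  proof -
    define u where "u = (\<alpha> + (l+1)*h - y) / h"
    have u: "0 \<le> u" "u \<le> 1" using that h by (auto simp: u_def field_simps)
    have "(((\<alpha> + (l+1)*h + (\<alpha> + l*h)) - 2 * y) / h) = 2*u - 1"
      using h by (simp add: u_def field_simps)
    then show ?thesis using quad1[OF u] by (simp add: u_def)
  qed
  have C: "4 * (y - (\<alpha> + (l-1)*h)) * ((\<alpha> + l*h) - y) / h\<^sup>2 \<le> 1" for l
  proof -
    have "4 * (y - (\<alpha> + (l-1)*h)) * ((\<alpha> + l*h) - y) \<le> h\<^sup>2"
    proof -
      have "h\<^sup>2 - 4 * (y - (\<alpha> + (l-1)*h)) * ((\<alpha> + l*h) - y) = (2*y - (\<alpha> + (l-1)*h) - (\<alpha> + l*h))\<^sup>2"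
        by (simp add: power2_eq_square algebra_simps)
      then show ?thesis by (metis diff_ge_0_iff_ge zero_le_power2)
    qed
    then show ?thesis using h by (simp add: divide_le_eq)
  qed
  show ?thesis
    apply (simp only: qbasis_def Let_def h_def[symmetric] nd split: if_split)
    apply (intro conjI impI)
    using A B C by (blast | simp)+
qed



lemma supnorm_ge: "finite I \<Longrightarrow> q \<in> I \<Longrightarrow> \<bar>v q\<bar> \<le> supnorm I v"
  unfolding supnorm_def by (rule Max_ge) auto

lemma supnorm_nonneg: "finite I \<Longrightarrow> I \<noteq> {} \<Longrightarrow> 0 \<le> supnorm I v"
  using supnorm_ge[of I _ v] by (meson abs_ge_zero all_not_in_conv order.trans)

lemma key_ineq:
  fixes t a s :: real
  assumes "t \<ge> 0" "s \<ge> 0" "a \<ge> s"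
  shows "(\<bar>1 - t*a\<bar>) + t * s \<le> (1 + 2*t * s) * (1 + t*(a-s))"
proof -
  have "0 \<le> 2*t * s*(t*(a-s))" using assms by simp
  moreover have "\<bar>1 - t*a\<bar> \<le> 1 + t*a" using assms by (smt (verit) mult_nonneg_nonneg)
  ultimately show ?thesis by (simp add: algebra_simps)
qed

lemma step_bound:
  fixes I :: "'a set" and A :: "'a \<Rightarrow> 'a \<Rightarrow> real" and v w :: "'a \<Rightarrow> real" and t C :: real
  assumes fin: "finite I" and ne: "I \<noteq> {}" and t: "t \<ge> 0"
   and dd: "\<forall>p\<in>I. (\<Sum>q\<in>I-{p}. \<bar>A p q\<bar>) \<le> A p p"
   and bC: "\<forall>p\<in>I. (\<Sum>q\<in>I-{p}. \<bar>A p q\<bar>) \<le> C"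
   and eq: "\<forall>p\<in>I. v p + t * (\<Sum>q\<in>I. A p q * v q) = w p - t * (\<Sum>q\<in>I. A p q * w q)"
  shows "supnorm I v \<le> (1 + 2*t*C) * supnorm I w"
proof -
  define V where "V = supnorm I v"
  define W where "W = supnorm I w"
  have "V \<in> (\<lambda>p. \<bar>v p\<bar>) ` I" unfolding V_def supnorm_def using fin ne by (intro Max_in) auto
  then obtain p where p: "p \<in> I" "\<bar>v p\<bar> = V" by auto
  define a where "a = A p p"
  define s where "s = (\<Sum>q\<in>I-{p}. \<bar>A p q\<bar>)"
  have s0: "s \<ge> 0" unfolding s_def by (intro sum_nonneg) auto
  have as: "s \<le> a" using dd p by (simp add: a_def s_def)
  have sC: "s \<le> C" using bC p by (simp add: s_def)
  have W0: "W \<ge> 0" unfolding W_def using supnorm_nonneg[OF fin ne] .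
  have rem: "(\<Sum>q\<in>I. A p q * u q) = a * u p + (\<Sum>q\<in>I-{p}. A p q * u q)" for u
    using fin p by (simp add: a_def sum.remove)
  have Rb: "\<bar>\<Sum>q\<in>I-{p}. A p q * u q\<bar> \<le> s * supnorm I u" for u
  proof -
    have "\<bar>\<Sum>q\<in>I-{p}. A p q * u q\<bar> \<le> (\<Sum>q\<in>I-{p}. \<bar>A p q\<bar> * \<bar>u q\<bar>)"
      by (rule order.trans[OF sum_abs]) (simp add: abs_mult)
    also have "\<dots> \<le> (\<Sum>q\<in>I-{p}. \<bar>A p q\<bar> * supnorm I u)"
      using fin by (intro sum_mono mult_left_mono supnorm_ge) auto
    also have "\<dots> = s * supnorm I u" by (simp add: s_def sum_distrib_right)
    finally show ?thesis .
  qed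
  define Rv where "Rv = (\<Sum>q\<in>I-{p}. A p q * v q)"
  define Rw where "Rw = (\<Sum>q\<in>I-{p}. A p q * w q)"
  have e: "(1 + t*a) * v p + t * Rv = (1 - t*a) * w p - t * Rw"
  proof -
    have "v p + t * (a * v p + Rv) = w p - t * (a * w p + Rw)"
      using eq p rem[of v] rem[of w] unfolding Rv_def Rw_def by metis
    then show ?thesis by (simp add: algebra_simps)
  qed
  have "(1 + t*(a - s)) * V \<le> \<bar>(1 + t*a) * v p + t * Rv\<bar>"
  proof -
    have "\<bar>(1 + t*a) * v p\<bar> = (1+t*a) * V" using p t as s0
      by (simp add: abs_mult)
    moreover have "\<bar>t * Rv\<bar> \<le> t * (s*V)" using Rb[of v] t by (simp add: abs_mult Rv_def V_def mult_left_mono)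
    ultimately show ?thesis by (simp add: algebra_simps)
  qed
  also have "\<dots> \<le> \<bar>1 - t*a\<bar> * W + t * (s * W)"
  proof -
    have "\<bar>(1 - t*a) * w p\<bar> \<le> \<bar>1 - t*a\<bar> * W" using supnorm_ge[OF fin p(1), of w] unfolding W_def
      by (simp add: abs_mult mult_left_mono)
    moreover have "\<bar>t * Rw\<bar> \<le> t * (s*W)" using Rb[of w] t by (simp add: abs_mult Rw_def W_def mult_left_mono)
    ultimately show ?thesis using e by (smt (verit))
  qed
  also have "\<dots> = (\<bar>1 - t*a\<bar> + t * s) * W" by (simp add: algebra_simps)
  also have "\<dots> \<le> ((1 + 2*t * s) * (1 + t*(a-s))) * W"
    using key_ineq[OF t s0 as] W0 by (rule mult_right_mono)
  finally have "(1 + t*(a - s)) * V \<le> (1 + t*(a-s)) * ((1 + 2*t * s) * W)" by (simp add: algebra_simps)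
  moreover have "1 + t*(a-s) > 0" using t as by (smt (verit) mult_nonneg_nonneg)
  ultimately have "V \<le> (1 + 2*t * s) * W" by simp
  also have "\<dots> \<le> (1 + 2*t*C) * W" using sC t W0 by (intro mult_right_mono) (auto intro: mult_left_mono)
  finally show ?thesis by (simp add: V_def W_def)
qed



lemma oneD:
  assumes g: "0 < \<gamma>" "\<gamma> < 1" and ab: "\<alpha> < \<beta>" and m: "2 \<le> m"
    and kf: "known_fact \<gamma> \<alpha> \<beta> m" and i: "i \<in> idx m"
  shows "(\<Sum>k\<in>idx m. Gmat \<gamma> \<alpha> \<beta> m i k) \<le> Dmat \<gamma> \<alpha> \<beta> m i i"
    "Dmat \<gamma> \<alpha> \<beta> m i i \<le> 2 * (\<beta>-\<alpha>) powr (1-\<gamma>) / (1-\<gamma>)"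
    "0 \<le> (\<Sum>k\<in>idx m. Gmat \<gamma> \<alpha> \<beta> m i k)"
proof -
  define x where "x = node \<alpha> \<beta> m (real i / 2)"
  have x: "\<alpha> \<le> x" "x \<le> \<beta>" using node_in[OF ab i] by (auto simp: x_def)
  have pos: "\<forall>k\<in>idx m. Gmat \<gamma> \<alpha> \<beta> m i k > 0" using kf i by (auto simp: known_fact_def)
  have dd: "\<bar>Dmat \<gamma> \<alpha> \<beta> m i i - Gmat \<gamma> \<alpha> \<beta> m i i\<bar>
        > (\<Sum>j\<in>idx m - {i}. \<bar>Dmat \<gamma> \<alpha> \<beta> m i j - Gmat \<gamma> \<alpha> \<beta> m i j\<bar>)"
    using kf i by (auto simp: known_fact_def)
  have Dii: "Dmat \<gamma> \<alpha> \<beta> m i i = integral {\<alpha>..\<beta>} (\<lambda>y. \<bar>x - y\<bar> powr (-\<gamma>))"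
    by (simp add: Dmat_def dcoef_def x_def)
  show "Dmat \<gamma> \<alpha> \<beta> m i i \<le> 2 * (\<beta>-\<alpha>) powr (1-\<gamma>) / (1-\<gamma>)"
    using ker(2)[OF g x] Dii by simp
  have "Gmat \<gamma> \<alpha> \<beta> m i i > 0" using pos i by auto
  then have int1: "(\<lambda>y. qbasis \<alpha> \<beta> m i y * \<bar>x - y\<bar> powr (- \<gamma>)) integrable_on {\<alpha>..\<beta>}"
    unfolding Gmat_def x_def using not_integrable_integral by fastforce
  have GD: "Gmat \<gamma> \<alpha> \<beta> m i i \<le> Dmat \<gamma> \<alpha> \<beta> m i i"
    unfolding Dii Gmat_def x_def[symmetric]
  proof (rule integral_le[OF int1 ker(1)[OF g x]])
    fix y
    have "qbasis \<alpha> \<beta> m i y \<le> 1" using qbasis_le1 ab m by auto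
    then show "qbasis \<alpha> \<beta> m i y * \<bar>x - y\<bar> powr (- \<gamma>) \<le> \<bar>x - y\<bar> powr (- \<gamma>)"
      using mult_right_mono[of _ 1 "\<bar>x - y\<bar> powr (- \<gamma>)"] by simp
  qed
  have off: "(\<Sum>j\<in>idx m - {i}. \<bar>Dmat \<gamma> \<alpha> \<beta> m i j - Gmat \<gamma> \<alpha> \<beta> m i j\<bar>)
     = (\<Sum>j\<in>idx m - {i}. Gmat \<gamma> \<alpha> \<beta> m i j)"
    using pos by (intro sum.cong) (auto simp: Dmat_def)
  have fin: "finite (idx m)" by (simp add: idx_def)
  have "(\<Sum>k\<in>idx m. Gmat \<gamma> \<alpha> \<beta> m i k) = Gmat \<gamma> \<alpha> \<beta> m i i + (\<Sum>j\<in>idx m - {i}. Gmat \<gamma> \<alpha> \<beta> m i j)"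
    using fin i by (simp add: sum.remove)
  then show "(\<Sum>k\<in>idx m. Gmat \<gamma> \<alpha> \<beta> m i k) \<le> Dmat \<gamma> \<alpha> \<beta> m i i"
    using dd off GD by simp
  show "0 \<le> (\<Sum>k\<in>idx m. Gmat \<gamma> \<alpha> \<beta> m i k)" using pos by (intro sum_nonneg) auto
qed



theorem theorem3p10:
  fixes \<gamma> a b c d T :: real and Mx My N :: nat and \<epsilon> :: "nat \<Rightarrow> nat \<times> nat \<Rightarrow> real"
  assumes "0 < \<gamma>" "\<gamma> < 1" "a < b" "c < d" "2 \<le> Mx" "2 \<le> My" "0 < T" "1 \<le> N"
    and "known_fact \<gamma> a b Mx" and "known_fact \<gamma> c d My"
    and "\<forall>k\<in>{1..N}. \<forall>p\<in>idx Mx \<times> idx My.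
           \<epsilon> k p + (T / real N) / 2 * Amul \<gamma> a b c d Mx My (\<epsilon> k) p
         = \<epsilon> (k - 1) p - (T / real N) / 2 * Amul \<gamma> a b c d Mx My (\<epsilon> (k - 1)) p"
  shows "\<forall>k\<le>N. supnorm (idx Mx \<times> idx My) (\<epsilon> k)
           \<le> exp (T * (4 * (b - a) powr (1 - \<gamma>) * (d - c) powr (1 - \<gamma>) / (1 - \<gamma>)\<^sup>2))
             * supnorm (idx Mx \<times> idx My) (\<epsilon> 0)"
proof -
  note g = assms(1,2)
  define I where "I = idx Mx \<times> idx My"
  define A where "A = (\<lambda>p q. Dmat \<gamma> a b Mx (fst p) (fst q) * Dmat \<gamma> c d My (snd p) (snd q)
         - Gmat \<gamma> a b Mx (fst p) (fst q) * Gmat \<gamma> c d My (snd p) (snd q))"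
  define t where "t = (T / real N) / 2"
  define Bx where "Bx = 2 * (b-a) powr (1-\<gamma>) / (1-\<gamma>)"
  define By where "By = 2 * (d-c) powr (1-\<gamma>) / (1-\<gamma>)"
  define C where "C = Bx * By"
  have CC: "C = 4 * (b - a) powr (1 - \<gamma>) * (d - c) powr (1 - \<gamma>) / (1 - \<gamma>)\<^sup>2"
    unfolding C_def Bx_def By_def by (simp add: power2_eq_square)
  have fin: "finite I" by (simp add: I_def idx_def)
  have ne: "I \<noteq> {}" using assms(5,6) by (auto simp: I_def idx_def)
  have t0: "t \<ge> 0" using assms(7) by (simp add: t_def)
  have Amul: "Amul \<gamma> a b c d Mx My v p = (\<Sum>q\<in>I. A p q * v q)" for v p
    by (simp add: Amul_def A_def I_def)
  have rowinfo: "(\<Sum>q\<in>I-{p}. \<bar>A p q\<bar>) \<le> A p p \<and> (\<Sum>q\<in>I-{p}. \<bar>A p q\<bar>) \<le> C" if p: "p \<in> I" for p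
  proof -
    obtain i j where ij: "p = (i, j)" "i \<in> idx Mx" "j \<in> idx My" using p by (auto simp: I_def)
    define gx where "gx = Gmat \<gamma> a b Mx i"
    define gy where "gy = Gmat \<gamma> c d My j"
    define sx where "sx = (\<Sum>k\<in>idx Mx. gx k)"
    define sy where "sy = (\<Sum>k\<in>idx My. gy k)"
    define dx where "dx = Dmat \<gamma> a b Mx i i"
    define dy where "dy = Dmat \<gamma> c d My j j"
    have px: "\<forall>k\<in>idx Mx. gx k > 0" using assms(9) ij by (auto simp: known_fact_def gx_def)
    have py: "\<forall>k\<in>idx My. gy k > 0" using assms(10) ij by (auto simp: known_fact_def gy_def)
    have ox: "sx \<le> dx" "dx \<le> Bx" "0 \<le> sx"
      using oneD[OF g assms(3,5,9) ij(2)] unfolding sx_def gx_def dx_def Bx_def by auto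
    have oy: "sy \<le> dy" "dy \<le> By" "0 \<le> sy"
      using oneD[OF g assms(4,6,10) ij(3)] unfolding sy_def gy_def dy_def By_def by auto
    have off: "\<bar>A p q\<bar> = gx (fst q) * gy (snd q)" if "q \<in> I - {p}" for q
    proof -
      have "Dmat \<gamma> a b Mx i (fst q) * Dmat \<gamma> c d My j (snd q) = 0"
        using that ij by (cases q) (auto simp: Dmat_def)
      moreover have "gx (fst q) * gy (snd q) > 0" using that px py by (auto simp: I_def)
      ultimately show ?thesis unfolding A_def ij gx_def gy_def fst_conv snd_conv
        by (metis abs_minus_commute abs_of_pos diff_zero)
    qed
    have "sx * sy = (\<Sum>k\<in>idx Mx. \<Sum>l\<in>idx My. gx k * gy l)" by (simp add: sx_def sy_def sum_product)
    also have "\<dots> = (\<Sum>(k,l)\<in>idx Mx \<times> idx My. gx k * gy l)" by (rule sum.cartesian_product)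
    also have "\<dots> = (\<Sum>q\<in>I. gx (fst q) * gy (snd q))" by (simp add: I_def case_prod_beta)
    finally have tot: "(\<Sum>q\<in>I. gx (fst q) * gy (snd q)) = sx * sy" by simp
    have S: "(\<Sum>q\<in>I-{p}. \<bar>A p q\<bar>) = sx * sy - gx i * gy j"
    proof -
      have "(\<Sum>q\<in>I-{p}. \<bar>A p q\<bar>) = (\<Sum>q\<in>I-{p}. gx (fst q) * gy (snd q))"
        using off by (rule sum.cong[OF refl])
      also have "\<dots> = (\<Sum>q\<in>I. gx (fst q) * gy (snd q)) - gx i * gy j"
        using fin p by (simp add: sum_diff1 ij)
      finally show ?thesis using tot by simp
    qed
    have App: "A p p = dx * dy - gx i * gy j" by (simp add: A_def ij dx_def dy_def gx_def gy_def)
    have m1: "sx * sy \<le> dx * dy" using ox oy by (intro mult_mono) auto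
    have m2: "dx * dy \<le> Bx * By" using ox oy by (intro mult_mono) auto
    have gg: "gx i * gy j > 0" using px py ij by auto
    show ?thesis using S App m1 m2 gg by (simp add: C_def)
  qed
  have step: "supnorm I (\<epsilon> k) \<le> (1 + 2*t*C) * supnorm I (\<epsilon> (k-1))" if k: "k \<in> {1..N}" for k
  proof (rule step_bound[OF fin ne t0, where A=A])
    show "\<forall>p\<in>I. (\<Sum>q\<in>I-{p}. \<bar>A p q\<bar>) \<le> A p p" using rowinfo by blast
    show "\<forall>p\<in>I. (\<Sum>q\<in>I-{p}. \<bar>A p q\<bar>) \<le> C" using rowinfo by blast
    show "\<forall>p\<in>I. \<epsilon> k p + t * (\<Sum>q\<in>I. A p q * \<epsilon> k q) = \<epsilon> (k-1) p - t * (\<Sum>q\<in>I. A p q * \<epsilon> (k-1) q)"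
    proof -
      have "\<forall>p\<in>idx Mx \<times> idx My.
           \<epsilon> k p + (T / real N) / 2 * Amul \<gamma> a b c d Mx My (\<epsilon> k) p
         = \<epsilon> (k - 1) p - (T / real N) / 2 * Amul \<gamma> a b c d Mx My (\<epsilon> (k - 1)) p"
        using assms(11) k by (rule bspec)
      then show ?thesis unfolding Amul t_def I_def .
    qed
  qed
  have C0: "C \<ge> 0" unfolding C_def Bx_def By_def using g by simp
  have ind: "k \<le> N \<longrightarrow> supnorm I (\<epsilon> k) \<le> (1 + 2*t*C)^k * supnorm I (\<epsilon> 0)" for k
  proof (induction k)
    case 0 then show ?case by simp
  next
    case (Suc k)
    show ?case
    proof
      assume "Suc k \<le> N"
      then have "supnorm I (\<epsilon> (Suc k)) \<le> (1 + 2*t*C) * supnorm I (\<epsilon> k)" using step[of "Suc k"] by simp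
      also have "\<dots> \<le> (1 + 2*t*C) * ((1 + 2*t*C)^k * supnorm I (\<epsilon> 0))"
        using Suc \<open>Suc k \<le> N\<close> t0 C0 by (intro mult_left_mono) auto
      finally show "supnorm I (\<epsilon> (Suc k)) \<le> (1 + 2*t*C)^Suc k * supnorm I (\<epsilon> 0)" by (simp add: algebra_simps)
    qed
  qed
  have n0: "0 \<le> supnorm I (\<epsilon> 0)" by (rule supnorm_nonneg[OF fin ne])
  show ?thesis
  proof (intro allI impI)
    fix k assume k: "k \<le> N"
    have x0: "0 \<le> 2*t*C" using t0 C0 by simp
    have "(1 + 2*t*C)^k \<le> exp (2*t*C) ^ k"
      using x0 by (intro power_mono exp_ge_add_one_self) auto
    also have "\<dots> = exp (real k * (2*t*C))" by (simp add: exp_of_nat_mult)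
    also have "\<dots> \<le> exp (T * C)"
    proof -
      have Np: "real N > 0" using assms(8) by simp
      have "real k * (2*t) = real k * (T / real N)" by (simp add: t_def)
      also have "\<dots> \<le> real N * (T / real N)"
        using k assms(7) Np by (intro mult_right_mono) auto
      also have "\<dots> = T" using Np by simp
      finally have "real k * (2*t) \<le> T" .
      then have "real k * (2*t) * C \<le> T * C" using C0 by (rule mult_right_mono)
      then show ?thesis by (simp add: mult.assoc)
    qed
    finally have "(1 + 2*t*C)^k \<le> exp (T*C)" .
    then have "supnorm I (\<epsilon> k) \<le> exp (T*C) * supnorm I (\<epsilon> 0)"
      using ind[of k] k n0 by (meson mult_right_mono order.trans)
    then show "supnorm (idx Mx \<times> idx My) (\<epsilon> k)
           \<le> exp (T * (4 * (b - a) powr (1 - \<gamma>) * (d - c) powr (1 - \<gamma>) / (1 - \<gamma>)\<^sup>2))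
             * supnorm (idx Mx \<times> idx My) (\<epsilon> 0)" by (simp add: CC I_def)
  qed
qed


end
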